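(* Let $Z_1,\dots,Z_n$ (primary sample) and $Z_{n+1},\dots,Z_N$ (auxiliary block) be independent, with $\widehat\eta=\{\widehat\pi_a,\widehat\mu_a\}_a$ fitted on the auxiliary block only. For each $r\in\{1,\dots,n\}$ let $Z_r'$ be an independent copy of $Z_r$, let $Z_i^{(r)}=Z_i$ for $i\ne r$ and $Z_r^{(r)}=Z_r'$, and let $\mathbb{P}_n^{(r)}f=\frac1n\sum_{i=1}^nf(Z_i^{(r)})$. Define $\widehat R_n(C;\widehat\eta)=\mathbb{P}_n\varphi_C(\cdot;\widehat\eta)$ and $\widehat R_n^{(r)}(C;\widehat\eta)=\mathbb{P}_n^{(r)}\varphi_C(\cdot;\widehat\eta)$. Suppose $\|\mu_a\|_\infty,\|\widehat\mu_a\|_\infty\le B<\infty$ a.s. for all $a$, and $\mathbb{P}\{\epsilon\le\widehat\pi_a(X)\le1-\epsilon\}=1$ for some $\epsilon>0$. Then $$\sup_{C\in\mathcal{C}_k}\big|\widehat R_n(C;\widehat\eta)-\widehat R_n^{(r)}(C;\widehat\eta)\big|=O_{\mathbb{P}}(n^{-1}),$$ uniformly in $r\in\{1,\dots,n\}$.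
   Context: Each $Z_i=(Y_i,A_i,X_i)$ is an i.i.d. copy of $Z=(Y,A,X)\sim\mathbb{P}$, $A\in\mathcal{A}=\{1,\dots,p\}$; $\mathbb{P}_n$ is the empirical measure of the primary sample. $\mu_a(X)=\mathbb{E}(Y\mid X,A=a)$, $\pi_a(X)=\mathbb{P}(A=a\mid X)$, $\mu=(\mu_1,\dots,\mu_p)^\top$. $\varphi_{1,a}(Z;\eta)=\frac{\mathbb{1}(A=a)}{\pi_a(X)}\{Y-\mu_A(X)\}+\mu_a(X)$, $\varphi_{2,a}(Z;\eta)=2\mu_a(X)\frac{\mathbb{1}(A=a)}{\pi_a(X)}\{Y-\mu_A(X)\}+\mu_a^2(X)$, $\varphi_C(Z;\eta)=\sum_a\{\varphi_{2,a}(Z;\eta)-2\varphi_{1,a}(Z;\eta)[\Pi_C(\mu)]_a+[\Pi_C(\mu)]_a^2\}$, evaluated at $\widehat\eta$ by replacing $\mu,\pi$ with $\widehat\mu,\widehat\pi$. Codebooks $C=\{c_1,\dots,c_k\}\subset\mathbb{R}^p$; $\mathcal{C}_k$ those of size $k$ in the image of $\mu$; $\Pi_C(x)=\arg\min_{c\in C}\|c-x\|_2^2$. *)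

theory Defs
  imports "HOL-Probability.Probability"
begin

text \<open>Observations z = (Y, A, X) :: real \<times> nat \<times> 'x. Points of R^p are functions
  nat \<Rightarrow> real, only the coordinates 1..p being relevant.\<close>

definition obsY :: "real \<times> nat \<times> 'x \<Rightarrow> real" where "obsY z = fst z"
definition obsA :: "real \<times> nat \<times> 'x \<Rightarrow> nat" where "obsA z = fst (snd z)"
definition obsX :: "real \<times> nat \<times> 'x \<Rightarrow> 'x" where "obsX z = snd (snd z)"

definition proj_cb :: "nat \<Rightarrow> (nat \<Rightarrow> real) set \<Rightarrow> (nat \<Rightarrow> real) \<Rightarrow> (nat \<Rightarrow> real)" where
  "proj_cb p C v = arg_min_on (\<lambda>c. \<Sum>a=1..p. (c a - v a)^2) C"

definition vec_of :: "nat \<Rightarrow> (nat \<Rightarrow> 'x \<Rightarrow> real) \<Rightarrow> 'x \<Rightarrow> (nat \<Rightarrow> real)" where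
  "vec_of p m x = (\<lambda>a. if a \<in> {1..p} then m a x else 0)"

definition codebooks :: "nat \<Rightarrow> nat \<Rightarrow> (nat \<Rightarrow> 'x \<Rightarrow> real) \<Rightarrow> 'x set \<Rightarrow> (nat \<Rightarrow> real) set set" where
  "codebooks p k m Xs = {C. finite C \<and> card C = k \<and> C \<subseteq> vec_of p m ` Xs}"

definition phi1 :: "(nat \<Rightarrow> 'x \<Rightarrow> real) \<Rightarrow> (nat \<Rightarrow> 'x \<Rightarrow> real) \<Rightarrow> nat \<Rightarrow> real \<times> nat \<times> 'x \<Rightarrow> real" where
  "phi1 mh ph a z = (if obsA z = a then 1 else 0) / ph a (obsX z) * (obsY z - mh (obsA z) (obsX z))
                    + mh a (obsX z)"

definition phi2 :: "(nat \<Rightarrow> 'x \<Rightarrow> real) \<Rightarrow> (nat \<Rightarrow> 'x \<Rightarrow> real) \<Rightarrow> nat \<Rightarrow> real \<times> nat \<times> 'x \<Rightarrow> real" where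
  "phi2 mh ph a z = 2 * mh a (obsX z) * ((if obsA z = a then 1 else 0) / ph a (obsX z))
                      * (obsY z - mh (obsA z) (obsX z)) + (mh a (obsX z))^2"

definition phiC :: "nat \<Rightarrow> (nat \<Rightarrow> real) set \<Rightarrow> (nat \<Rightarrow> 'x \<Rightarrow> real) \<Rightarrow> (nat \<Rightarrow> 'x \<Rightarrow> real)
                     \<Rightarrow> real \<times> nat \<times> 'x \<Rightarrow> real" where
  "phiC p C mh ph z = (let q = proj_cb p C (vec_of p mh (obsX z)) in
      \<Sum>a=1..p. phi2 mh ph a z - 2 * phi1 mh ph a z * q a + (q a)^2)"

definition emp_risk :: "nat \<Rightarrow> (nat \<Rightarrow> real) set \<Rightarrow> (nat \<Rightarrow> 'x \<Rightarrow> real) \<Rightarrow> (nat \<Rightarrow> 'x \<Rightarrow> real)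
                        \<Rightarrow> nat \<Rightarrow> (nat \<Rightarrow> real \<times> nat \<times> 'x) \<Rightarrow> real" where
  "emp_risk p C mh ph n zs = (1 / real n) * (\<Sum>i=1..n. phiC p C mh ph (zs i))"

definition aux_sigma :: "'w measure \<Rightarrow> 'z measure \<Rightarrow> (nat \<Rightarrow> 'w \<Rightarrow> 'z) \<Rightarrow> nat \<Rightarrow> nat \<Rightarrow> 'w measure" where
  "aux_sigma M MZ Z n N = sigma (space M)
     {Z i -` S \<inter> space M | i S. n < i \<and> i \<le> N \<and> S \<in> sets MZ}"

end

theory Submission
  imports Defs
begin


lemma indep_null:
  fixes M :: "'w measure" and X :: "'j \<Rightarrow> 'w \<Rightarrow> 'z" and MZ :: "'z measure"
    and F :: "'w measure" and Pz :: "'z measure"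
  assumes M: "prob_space M"
    and ind: "prob_space.indep_vars M (\<lambda>_. MZ) X UNIV"
    and j0: "j0 \<notin> Jaux"
    and sF: "sets F = sigma_sets (space M) (\<Union>i\<in>Jaux. {X i -` A \<inter> space M | A. A \<in> sets MZ})"
    and spF: "space F = space M"
    and law: "distr M MZ (X j0) = Pz"
    and Bad: "Bad \<in> sets (F \<Otimes>\<^sub>M MZ)"
    and AEz: "AE \<omega> in M. emeasure Pz (Pair \<omega> -` Bad) = 0"
  shows "emeasure M {\<omega>\<in>space M. (\<omega>, X j0 \<omega>) \<in> Bad} = 0"
proof -
  interpret prob_space M by (rule M)
  define E where "E = (\<lambda>i. {X i -` A \<inter> space M | A. A \<in> sets MZ})"
  have rv: "\<And>j. X j \<in> measurable M MZ" and ind0: "indep_sets E UNIV"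
    using ind unfolding indep_vars_def2 E_def by auto
  define I where "I = case_bool Jaux {j0}"
  have "indep_sets (\<lambda>b. sigma_sets (space M) (\<Union>i\<in>I b. E i)) UNIV"
  proof (rule indep_sets_collect_sigma)
    show "indep_sets E (\<Union>b\<in>UNIV. I b)"
      using ind0 by (rule indep_sets_mono_index[rotated]) auto
  next
    fix b i assume "b \<in> (UNIV::bool set)" "i \<in> I b"
    show "Int_stable (E i)"
      unfolding E_def
      apply (auto simp: Int_stable_def)
      apply (rule_tac x="A \<inter> Aa" in exI)
      apply auto
      done
  next
    show "disjoint_family_on I UNIV"
      using j0 unfolding disjoint_family_on_def I_def by (auto split: bool.split)
  qed
  moreover have "(\<lambda>b. sigma_sets (space M) (\<Union>i\<in>I b. E i)) = case_bool (sets F) (sigma_sets (space M) (E j0))"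
    by (rule ext) (auto simp: I_def sF E_def split: bool.split)
  ultimately have iset: "indep_set (sets F) (sigma_sets (space M) (E j0))"
    unfolding indep_set_def by simp
  have FsubM: "sets F \<subseteq> sets M"
    unfolding sF
    apply (rule sets.sigma_sets_subset)
    using rv by (auto intro: measurable_sets)
  have idm: "(\<lambda>\<omega>. \<omega>) \<in> measurable M F"
  proof (rule measurableI)
    fix x assume "x \<in> space M" then show "x \<in> space F" using spF by simp
  next
    fix A assume A: "A \<in> sets F"
    then have "A \<subseteq> space M" using sets.sets_into_space spF by fastforce
    then show "(\<lambda>\<omega>. \<omega>) -` A \<inter> space M \<in> sets M" using A FsubM by (simp add: Int_absorb2 subset_iff)
  qed
  have idsets: "{(\<lambda>\<omega>. \<omega>) -` A \<inter> space M | A. A \<in> sets F} = sets F"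
  proof -
    have *: "(\<lambda>\<omega>. \<omega>) -` A \<inter> space M = A" if "A \<in> sets F" for A
      using sets.sets_into_space[OF that] spF by auto
    show ?thesis
    proof (intro set_eqI iffI)
      fix B assume "B \<in> {(\<lambda>\<omega>. \<omega>) -` A \<inter> space M | A. A \<in> sets F}"
      then obtain A where "B = (\<lambda>\<omega>. \<omega>) -` A \<inter> space M" "A \<in> sets F" by blast
      then show "B \<in> sets F" using * by simp
    next
      fix B assume B: "B \<in> sets F"
      show "B \<in> {(\<lambda>\<omega>. \<omega>) -` A \<inter> space M | A. A \<in> sets F}"
        using *[OF B] B by blast
    qed
  qed
  have sF2: "sigma_sets (space M) (sets F) = sets F"
    using sets.sigma_sets_eq[of F] spF by simp
  have sPz: "sets Pz = sets MZ" using law[symmetric] by simp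
  interpret Pz: prob_space Pz using law prob_space_distr rv by metis
  have pm: "(\<lambda>\<omega>. (\<omega>, X j0 \<omega>)) \<in> measurable M (F \<Otimes>\<^sub>M MZ)"
    using idm rv by (auto intro: measurable_Pair)
  interpret DF: prob_space "distr M F (\<lambda>\<omega>. \<omega>)" by (rule prob_space_distr[OF idm])
  have deq: "distr M F (\<lambda>\<omega>. \<omega>) \<Otimes>\<^sub>M Pz = distr M (F \<Otimes>\<^sub>M MZ) (\<lambda>\<omega>. (\<omega>, X j0 \<omega>))"
  proof (rule pair_measure_eqI)
    show "sigma_finite_measure (distr M F (\<lambda>\<omega>. \<omega>))" ..
    show "sigma_finite_measure Pz" ..
    show "sets (distr M F (\<lambda>\<omega>. \<omega>) \<Otimes>\<^sub>M Pz) = sets (distr M (F \<Otimes>\<^sub>M MZ) (\<lambda>\<omega>. (\<omega>, X j0 \<omega>)))"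
      using sPz by (simp cong: sets_pair_measure_cong)
  next
    fix A B assume A: "A \<in> sets (distr M F (\<lambda>\<omega>. \<omega>))" and B: "B \<in> sets Pz"
    have A': "A \<in> sets F" using A by simp
    have B': "B \<in> sets MZ" using B sPz by simp
    have Asp: "A \<inter> space M = A" using sets.sets_into_space[OF A'] spF by auto
    have AM: "A \<in> sets M" using A' FsubM by auto
    have "emeasure (distr M (F \<Otimes>\<^sub>M MZ) (\<lambda>\<omega>. (\<omega>, X j0 \<omega>))) (A \<times> B)
        = emeasure M ((\<lambda>\<omega>. (\<omega>, X j0 \<omega>)) -` (A \<times> B) \<inter> space M)"
      using A' B' by (intro emeasure_distr[OF pm]) auto
    also have "(\<lambda>\<omega>. (\<omega>, X j0 \<omega>)) -` (A \<times> B) \<inter> space M = A \<inter> (X j0 -` B \<inter> space M)"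
      using Asp by auto
    also have "emeasure M (A \<inter> (X j0 -` B \<inter> space M)) = ennreal (prob A * prob (X j0 -` B \<inter> space M))"
    proof -
      have "X j0 -` B \<inter> space M \<in> sigma_sets (space M) (E j0)"
        unfolding E_def using B' by (intro sigma_sets.Basic) blast
      then have "prob (A \<inter> (X j0 -` B \<inter> space M)) = prob A * prob (X j0 -` B \<inter> space M)"
        using indep_setD[OF iset A'] by blast
      then show ?thesis by (simp add: emeasure_eq_measure)
    qed
    also have "\<dots> = emeasure (distr M F (\<lambda>\<omega>. \<omega>)) A * emeasure Pz B"
    proof -
      have "emeasure (distr M F (\<lambda>\<omega>. \<omega>)) A = emeasure M A"
        using emeasure_distr[OF idm A'] Asp by simp
      moreover have "emeasure Pz B = emeasure M (X j0 -` B \<inter> space M)"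
        using emeasure_distr[OF rv[of j0] B'] law by simp
      ultimately show ?thesis by (simp add: emeasure_eq_measure ennreal_mult)
    qed
    finally show "emeasure (distr M F (\<lambda>\<omega>. \<omega>)) A * emeasure Pz B
        = emeasure (distr M (F \<Otimes>\<^sub>M MZ) (\<lambda>\<omega>. (\<omega>, X j0 \<omega>))) (A \<times> B)" by simp
  qed
  have "emeasure M {\<omega>\<in>space M. (\<omega>, X j0 \<omega>) \<in> Bad}
      = emeasure (distr M (F \<Otimes>\<^sub>M MZ) (\<lambda>\<omega>. (\<omega>, X j0 \<omega>))) Bad"
    using emeasure_distr[OF pm Bad] by (simp add: vimage_def Int_def conj_commute)
  also have "\<dots> = emeasure (distr M F (\<lambda>\<omega>. \<omega>) \<Otimes>\<^sub>M Pz) Bad" using deq by simp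
  also have "\<dots> = (\<integral>\<^sup>+\<omega>. emeasure Pz (Pair \<omega> -` Bad) \<partial>distr M F (\<lambda>\<omega>. \<omega>))"
  proof (rule Pz.emeasure_pair_measure_alt)
    show "Bad \<in> sets (distr M F (\<lambda>\<omega>. \<omega>) \<Otimes>\<^sub>M Pz)"
      using Bad sPz by (simp cong: sets_pair_measure_cong)
  qed
  also have "\<dots> = (\<integral>\<^sup>+\<omega>. emeasure Pz (Pair \<omega> -` Bad) \<partial>M)"
  proof -
    have "Bad \<in> sets (F \<Otimes>\<^sub>M Pz)" using Bad sPz by (simp cong: sets_pair_measure_cong)
    then have "(\<lambda>x. emeasure Pz (Pair x -` Bad)) \<in> borel_measurable F"
      by (rule Pz.measurable_emeasure_Pair)
    then have "(\<lambda>x. emeasure Pz (Pair x -` Bad)) \<in> borel_measurable (distr M F (\<lambda>\<omega>. \<omega>))"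
      by (simp cong: measurable_cong_sets)
    from nn_integral_distr[OF idm this] show ?thesis by simp
  qed
  also have "\<dots> = (\<integral>\<^sup>+\<omega>. 0 \<partial>M)"
    by (rule nn_integral_cong_AE) (use AEz in auto)
  finally show ?thesis by simp
qed



lemma proj_empty: "proj_cb p {} v = proj_cb p {} w"
  unfolding proj_cb_def arg_min_on_def arg_min_def is_arg_min_def by simp

lemma q_bound:
  assumes C: "C \<in> codebooks p k mu Xs"
    and mb: "\<And>a x. a \<in> {1..p} \<Longrightarrow> x \<in> Xs \<Longrightarrow> \<bar>mu a x\<bar> \<le> B"
    and a: "a \<in> {1..p}"
  shows "\<bar>proj_cb p C v a\<bar> \<le> \<bar>B\<bar> + (\<Sum>b=1..p. \<bar>proj_cb p {} (\<lambda>_. 0) b\<bar>)"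
proof (cases "C = {}")
  case True
  have "\<bar>proj_cb p {} (\<lambda>_. 0) a\<bar> \<le> (\<Sum>b=1..p. \<bar>proj_cb p {} (\<lambda>_. 0) b\<bar>)"
    using a by (intro member_le_sum) auto
  then show ?thesis using True proj_empty[of p v "\<lambda>_. 0"] by simp
next
  case False
  have fin: "finite C" and sub: "C \<subseteq> vec_of p mu ` Xs" using C unfolding codebooks_def by auto
  have "proj_cb p C v \<in> C" unfolding proj_cb_def using arg_min_if_finite(1)[OF fin False] .
  then obtain x where x: "x \<in> Xs" "proj_cb p C v = vec_of p mu x" using sub by auto
  then have "proj_cb p C v a = mu a x" using a by (simp add: vec_of_def)
  then have "\<bar>proj_cb p C v a\<bar> \<le> \<bar>B\<bar>" using mb[OF a x(1)] by simp
  moreover have "0 \<le> (\<Sum>b=1..p. \<bar>proj_cb p {} (\<lambda>_. 0) b\<bar>)" by (intro sum_nonneg) auto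
  ultimately show ?thesis by linarith
qed

lemma s_bound:
  fixes mh ph :: "nat \<Rightarrow> 'x \<Rightarrow> real"
  assumes a: "a \<in> {1..p}"
    and mb: "\<forall>b\<in>{1..p}. \<bar>mh b (obsX z)\<bar> \<le> B'"
    and pb: "\<forall>b\<in>{1..p}. eps \<le> ph b (obsX z)"
    and eps: "eps > 0" and Y: "\<bar>obsY z\<bar> \<le> T" and B': "B' \<ge> 0" and T: "T \<ge> 0"
  shows "\<bar>(if obsA z = a then 1 else 0) / ph a (obsX z) * (obsY z - mh (obsA z) (obsX z))\<bar> \<le> (T + B') / eps"
proof (cases "obsA z = a")
  case True
  have p1: "eps \<le> ph a (obsX z)" using pb a by auto
  have d: "\<bar>obsY z - mh a (obsX z)\<bar> \<le> T + B'" using mb a Y by fastforce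
  have "\<bar>1 / ph a (obsX z) * (obsY z - mh a (obsX z))\<bar> = \<bar>obsY z - mh a (obsX z)\<bar> / ph a (obsX z)"
    using p1 eps by (simp add: abs_mult)
  also have "\<dots> \<le> (T + B') / ph a (obsX z)" using d p1 eps by (intro divide_right_mono) auto
  also have "\<dots> \<le> (T + B') / eps" using p1 eps B' T by (intro divide_left_mono) auto
  finally show ?thesis using True by simp
next
  case False
  then show ?thesis using eps B' T by simp
qed

lemma phiC_bound:
  fixes mh ph :: "nat \<Rightarrow> 'x \<Rightarrow> real"
  assumes mb: "\<forall>b\<in>{1..p}. \<bar>mh b (obsX z)\<bar> \<le> B'"
    and pb: "\<forall>b\<in>{1..p}. eps \<le> ph b (obsX z)"
    and eps: "eps > 0" and Y: "\<bar>obsY z\<bar> \<le> T" and B': "B' \<ge> 0" and T: "T \<ge> 0"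
    and qb: "\<forall>b\<in>{1..p}. \<bar>proj_cb p C (vec_of p mh (obsX z)) b\<bar> \<le> Q"
  shows "\<bar>phiC p C mh ph z\<bar> \<le> real p * (2*B'*((T + B') / eps) + B'^2 + 2*((T + B') / eps + B')*Q + Q^2)"
proof -
  define R where "R = (T + B') / eps"
  define q where "q = proj_cb p C (vec_of p mh (obsX z))"
  define c where "c = 2*B'*R + B'^2 + 2*(R + B')*Q + Q^2"
  have tb: "\<bar>phi2 mh ph a z - 2 * phi1 mh ph a z * q a + (q a)^2\<bar> \<le> c" if a: "a \<in> {1..p}" for a
  proof -
    define s where "s = (if obsA z = a then 1 else 0) / ph a (obsX z) * (obsY z - mh (obsA z) (obsX z))"
    define m where "m = mh a (obsX z)"
    have sb: "\<bar>s\<bar> \<le> R" unfolding s_def R_def by (rule s_bound[where a=a and p=p and mh=mh and z=z and ph=ph and eps=eps and T=T and B'=B', OF a mb pb eps Y B' T])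
    have mb': "\<bar>m\<bar> \<le> B'" unfolding m_def using mb a by auto
    have qb': "\<bar>q a\<bar> \<le> Q" unfolding q_def using qb a by auto
    have e1: "phi2 mh ph a z = 2 * m * s + m^2" unfolding phi2_def s_def m_def by simp
    have e2: "phi1 mh ph a z = s + m" unfolding phi1_def s_def m_def by simp
    have h1: "\<bar>2 * m * s\<bar> \<le> 2*B'*R"
      using mult_mono[OF mb' sb] B' by (simp add: abs_mult)
    have h2: "m^2 \<le> B'^2" using power_mono[OF mb', of 2] by simp
    have h3: "\<bar>2 * (s + m) * q a\<bar> \<le> 2*(R+B')*Q"
    proof -
      have sm: "\<bar>s+m\<bar> \<le> R + B'" using sb mb' by linarith
      have R0: "0 \<le> R" unfolding R_def using T B' eps by simp
      have "\<bar>s + m\<bar> * \<bar>q a\<bar> \<le> (R + B') * Q" using mult_mono[OF sm qb'] R0 B' by simp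
      moreover have "\<bar>2 * (s + m) * q a\<bar> = 2 * (\<bar>s + m\<bar> * \<bar>q a\<bar>)" by (simp only: abs_mult abs_numeral mult.assoc)
      moreover have "2 * (R + B') * Q = 2 * ((R + B') * Q)" by simp
      ultimately show ?thesis by linarith
    qed
    have h4: "(q a)^2 \<le> Q^2" using power_mono[OF qb', of 2] by simp
    have "\<bar>2 * m * s + m^2 - 2 * (s + m) * q a + (q a)^2\<bar> \<le> c"
      using h1 h2 h3 h4 unfolding c_def abs_le_iff
      by (smt (verit) zero_le_power2)
    then show ?thesis unfolding e1 e2 by (simp add: mult.assoc)
  qed
  have "\<bar>phiC p C mh ph z\<bar> = \<bar>\<Sum>a=1..p. phi2 mh ph a z - 2 * phi1 mh ph a z * q a + (q a)^2\<bar>"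
    unfolding phiC_def q_def Let_def by simp
  also have "\<dots> \<le> (\<Sum>a=1..p. \<bar>phi2 mh ph a z - 2 * phi1 mh ph a z * q a + (q a)^2\<bar>)"
    by (rule sum_abs)
  also have "\<dots> \<le> (\<Sum>a=1..p. c)" by (intro sum_mono tb) auto
  also have "\<dots> = real p * c" by simp
  finally show ?thesis unfolding c_def R_def .
qed

lemma emp_diff:
  assumes r: "r \<in> {1..n}"
  shows "emp_risk p C mh ph n zs - emp_risk p C mh ph n (\<lambda>i. if i = r then w else zs i)
       = (phiC p C mh ph (zs r) - phiC p C mh ph w) / real n"
proof -
  let ?f = "\<lambda>i. phiC p C mh ph (zs i)"
  let ?g = "\<lambda>i. phiC p C mh ph (if i = r then w else zs i)"
  have "(\<Sum>i=1..n. ?f i) = ?f r + (\<Sum>i\<in>{1..n}-{r}. ?f i)" using r by (simp add: sum.remove)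
  moreover have "(\<Sum>i=1..n. ?g i) = ?g r + (\<Sum>i\<in>{1..n}-{r}. ?g i)" using r by (simp add: sum.remove)
  moreover have "(\<Sum>i\<in>{1..n}-{r}. ?g i) = (\<Sum>i\<in>{1..n}-{r}. ?f i)" by (intro sum.cong) auto
  ultimately have D: "(\<Sum>i=1..n. ?f i) - (\<Sum>i=1..n. ?g i) = ?f r - phiC p C mh ph w" by simp
  have "emp_risk p C mh ph n zs - emp_risk p C mh ph n (\<lambda>i. if i = r then w else zs i)
      = (1 / real n) * ((\<Sum>i=1..n. ?f i) - (\<Sum>i=1..n. ?g i))"
    unfolding emp_risk_def by (simp add: right_diff_distrib)
  then show ?thesis unfolding D by simp
qed



theorem lemmaA9:
  fixes M :: "'w measure" and MX :: "'x measure"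
    and Z Z' :: "nat \<Rightarrow> 'w \<Rightarrow> real \<times> nat \<times> 'x"
    and Pz :: "(real \<times> nat \<times> 'x) measure"
    and N :: "nat \<Rightarrow> nat" and p k :: nat
    and mu :: "nat \<Rightarrow> 'x \<Rightarrow> real"
    and muhat pihat :: "nat \<Rightarrow> 'w \<Rightarrow> nat \<Rightarrow> 'x \<Rightarrow> real"
    and B \<epsilon> :: real
  defines "MZ \<equiv> borel \<Otimes>\<^sub>M (count_space UNIV \<Otimes>\<^sub>M MX)"
  assumes M: "prob_space M"
    and p: "p \<ge> 1"
    \<comment> \<open>all Z_i and all copies Z'_r mutually independent with common law Pz\<close>
    and indep: "prob_space.indep_vars M (\<lambda>_. MZ)
                  (\<lambda>j. case j of Inl i \<Rightarrow> Z i | Inr r \<Rightarrow> Z' r) (UNIV :: (nat + nat) set)"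
    and lawZ: "\<And>i. distr M MZ (Z i) = Pz"
    and lawZ': "\<And>r. distr M MZ (Z' r) = Pz"
    and Arange: "AE z in Pz. obsA z \<in> {1..p}"
    \<comment> \<open>mu_a(X) = E(Y | X, A = a)\<close>
    and intY: "integrable Pz obsY"
    and mu_meas: "\<And>a. mu a \<in> borel_measurable MX"
    and mu_reg: "\<And>a S. a \<in> {1..p} \<Longrightarrow> S \<in> sets MX \<Longrightarrow>
         (\<integral>z. obsY z * indicator {z. obsA z = a} z * indicator S (obsX z) \<partial>Pz)
       = (\<integral>z. mu a (obsX z) * indicator {z. obsA z = a} z * indicator S (obsX z) \<partial>Pz)"
    \<comment> \<open>eta-hat_n is fitted on the auxiliary block Z_{n+1},...,Z_{N n} only\<close>
    and muhat_meas: "\<And>n a. (\<lambda>(\<omega>, x). muhat n \<omega> a x)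
                        \<in> borel_measurable (aux_sigma M MZ Z n (N n) \<Otimes>\<^sub>M MX)"
    and pihat_meas: "\<And>n a. (\<lambda>(\<omega>, x). pihat n \<omega> a x)
                        \<in> borel_measurable (aux_sigma M MZ Z n (N n) \<Otimes>\<^sub>M MX)"
    \<comment> \<open>boundedness and overlap\<close>
    and mu_bdd: "\<And>a x. a \<in> {1..p} \<Longrightarrow> x \<in> space MX \<Longrightarrow> \<bar>mu a x\<bar> \<le> B"
    and muhat_bdd: "\<And>n. AE \<omega> in M. \<forall>a\<in>{1..p}. \<forall>x\<in>space MX. \<bar>muhat n \<omega> a x\<bar> \<le> B"
    and eps: "\<epsilon> > 0"
    and pihat_overlap: "\<And>n. AE \<omega> in M. AE x in distr Pz MX obsX.
                           \<forall>a\<in>{1..p}. \<epsilon> \<le> pihat n \<omega> a x \<and> pihat n \<omega> a x \<le> 1 - \<epsilon>"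
  shows "\<forall>\<delta>>0. \<exists>K n0. \<forall>n\<ge>n0. \<forall>r\<in>{1..n}. \<exists>E\<in>sets M. measure M E \<ge> 1 - \<delta> \<and>
           (\<forall>\<omega>\<in>E. \<forall>C\<in>codebooks p k mu (space MX).
              \<bar>emp_risk p C (muhat n \<omega>) (pihat n \<omega>) n (\<lambda>i. Z i \<omega>)
               - emp_risk p C (muhat n \<omega>) (pihat n \<omega>) n (\<lambda>i. if i = r then Z' r \<omega> else Z i \<omega>)\<bar>
              \<le> K / real n)"
proof (intro allI impI)
  fix \<delta> :: real assume \<delta>: "\<delta> > 0"
  interpret prob_space M by (rule M)
  define X where "X = (\<lambda>j. case j of Inl i \<Rightarrow> Z i | Inr r \<Rightarrow> Z' r)"
  have indX: "indep_vars (\<lambda>_. MZ) X UNIV" using indep unfolding X_def .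
  have rvX: "X j \<in> measurable M MZ" for j using indX unfolding indep_vars_def2 by auto
  have rvZ: "Z i \<in> measurable M MZ" for i using rvX[of "Inl i"] by (simp add: X_def)
  have rvZ': "Z' i \<in> measurable M MZ" for i using rvX[of "Inr i"] by (simp add: X_def)
  have sPz: "sets Pz = sets MZ" and spPz: "space Pz = space MZ"
    using lawZ[of 0, symmetric] by auto
  have spMZ: "space MZ = UNIV \<times> (UNIV \<times> space MX)"
    unfolding MZ_def by (simp add: space_pair_measure)
  have obsY_eq: "obsY = fst" by (rule ext) (simp add: obsY_def)
  have obsX_eq: "obsX = (\<lambda>z. snd (snd z))" by (rule ext) (simp add: obsX_def)
  have obsY_m: "obsY \<in> borel_measurable MZ" unfolding MZ_def obsY_eq by simp
  have obsX_m: "obsX \<in> measurable MZ MX" unfolding MZ_def obsX_eq by simp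
  have obsX_Pz: "obsX \<in> measurable Pz MX" using obsX_m sPz by (simp cong: measurable_cong_sets)
  interpret Pz: prob_space Pz using lawZ[of 0] prob_space_distr[OF rvZ[of 0]] by metis
  define IY where "IY = (\<integral>z. \<bar>obsY z\<bar> \<partial>Pz)"
  have IY0: "IY \<ge> 0" unfolding IY_def by simp
  define T where "T = 4 * IY / \<delta> + 1"
  have T0: "T > 0"
  proof -
    have "0 \<le> 4 * IY / \<delta>" using IY0 \<delta> by simp
    then show ?thesis unfolding T_def by linarith
  qed
  have tail: "Pz.prob {z\<in>space Pz. T \<le> \<bar>obsY z\<bar>} \<le> \<delta> / 4"
  proof -
    have intA: "integrable Pz (\<lambda>z. \<bar>obsY z\<bar>)" using intY by simp
    have "Pz.prob {z\<in>space Pz. T \<le> \<bar>obsY z\<bar>} \<le> IY / T"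
      unfolding IY_def by (rule integral_Markov_inequality_measure[OF intA _ _ T0, of "space Pz"]) auto
    also have "IY / T \<le> \<delta> / 4"
      using T0 \<delta> IY0 unfolding T_def by (simp add: field_simps)
    finally show ?thesis .
  qed
  define B' where "B' = \<bar>B\<bar>"
  define Q where "Q = \<bar>B\<bar> + (\<Sum>b=1..p. \<bar>proj_cb p {} (\<lambda>_. 0) b\<bar>)"
  define K0 where "K0 = real p * (2*B'*((T + B') / \<epsilon>) + B'^2 + 2*((T + B') / \<epsilon> + B')*Q + Q^2)"
  show "\<exists>K n0. \<forall>n\<ge>n0. \<forall>r\<in>{1..n}. \<exists>E\<in>sets M. measure M E \<ge> 1 - \<delta> \<and>
           (\<forall>\<omega>\<in>E. \<forall>C\<in>codebooks p k mu (space MX).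
              \<bar>emp_risk p C (muhat n \<omega>) (pihat n \<omega>) n (\<lambda>i. Z i \<omega>)
               - emp_risk p C (muhat n \<omega>) (pihat n \<omega>) n (\<lambda>i. if i = r then Z' r \<omega> else Z i \<omega>)\<bar>
              \<le> K / real n)"
  proof (intro exI[where x="2 * K0"] exI[where x="0::nat"] allI impI ballI)
    fix n r :: nat assume r: "r \<in> {1..n}"
    define F where "F = aux_sigma M MZ Z n (N n)"
    define G where "G = {Z i -` S \<inter> space M | i S. n < i \<and> i \<le> N n \<and> S \<in> sets MZ}"
    have GP: "G \<subseteq> Pow (space M)" unfolding G_def by auto
    have spF: "space F = space M" unfolding F_def aux_sigma_def G_def[symmetric] using GP by (simp add: space_measure_of_conv)
    have sF0: "sets F = sigma_sets (space M) G"
      unfolding F_def aux_sigma_def G_def[symmetric] using GP by (simp add: sets_measure_of)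
    have GU: "G = (\<Union>i\<in>Inl ` {n<..N n}. {X i -` A \<inter> space M | A. A \<in> sets MZ})"
    proof (intro set_eqI iffI)
      fix B assume "B \<in> G"
      then obtain i S where i: "B = Z i -` S \<inter> space M" "n < i" "i \<le> N n" "S \<in> sets MZ"
        unfolding G_def by blast
      have m1: "B \<in> {X (Inl i) -` A \<inter> space M | A. A \<in> sets MZ}"
        using i(1,4) unfolding X_def by (simp only: sum.case) blast
      have m2: "Inl i \<in> Inl ` {n<..N n}" using i(2,3) by simp
      show "B \<in> (\<Union>i\<in>Inl ` {n<..N n}. {X i -` A \<inter> space M | A. A \<in> sets MZ})"
        using UN_I[where a="Inl i" and A="Inl ` {n<..N n}" and B="\<lambda>j. {X j -` A \<inter> space M | A. A \<in> sets MZ}", OF m2 m1] .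
    next
      fix B assume "B \<in> (\<Union>i\<in>Inl ` {n<..N n}. {X i -` A \<inter> space M | A. A \<in> sets MZ})"
      then obtain i A where i: "i \<in> {n<..N n}" "B = X (Inl i) -` A \<inter> space M" "A \<in> sets MZ" by blast
      have "B = Z i -` A \<inter> space M" using i(2) unfolding X_def by simp
      then show "B \<in> G" unfolding G_def using i(1,3) by auto
    qed
    have sF: "sets F = sigma_sets (space M) (\<Union>i\<in>Inl ` {n<..N n}. {X i -` A \<inter> space M | A. A \<in> sets MZ})"
      using sF0 GU by simp
    define Good where "Good = (\<lambda>\<omega> z. \<forall>a\<in>{1..p}. \<epsilon> \<le> pihat n \<omega> a (obsX z) \<and> pihat n \<omega> a (obsX z) \<le> 1 - \<epsilon>)"
    define Bad where "Bad = {wz \<in> space (F \<Otimes>\<^sub>M MZ). \<not> Good (fst wz) (snd wz)}"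
    have gm[measurable]: "(\<lambda>x. pihat n (fst x) a (obsX (snd x))) \<in> borel_measurable (F \<Otimes>\<^sub>M MZ)" for a
    proof -
      have "(\<lambda>x. (fst x, obsX (snd x))) \<in> measurable (F \<Otimes>\<^sub>M MZ) (F \<Otimes>\<^sub>M MX)"
        using obsX_m by (intro measurable_Pair) auto
      from measurable_compose[OF this pihat_meas[of n a, folded F_def]] show ?thesis by simp
    qed
    have "Measurable.pred (F \<Otimes>\<^sub>M MZ) (\<lambda>x. \<not> Good (fst x) (snd x))"
      unfolding Good_def by measurable
    then have Bad_sets: "Bad \<in> sets (F \<Otimes>\<^sub>M MZ)" unfolding Bad_def pred_def .
    have AEz: "AE \<omega> in M. emeasure Pz (Pair \<omega> -` Bad) = 0"
      using pihat_overlap[of n]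
    proof (rule AE_mp, intro AE_I2 impI)
      fix \<omega> assume \<omega>: "\<omega> \<in> space M"
        and ae: "AE x in distr Pz MX obsX. \<forall>a\<in>{1..p}. \<epsilon> \<le> pihat n \<omega> a x \<and> pihat n \<omega> a x \<le> 1 - \<epsilon>"
      from ae obtain N0 where N0: "{x \<in> space (distr Pz MX obsX). \<not> (\<forall>a\<in>{1..p}. \<epsilon> \<le> pihat n \<omega> a x \<and> pihat n \<omega> a x \<le> 1 - \<epsilon>)} \<subseteq> N0"
        "emeasure (distr Pz MX obsX) N0 = 0" "N0 \<in> sets (distr Pz MX obsX)"
        by (rule AE_E)
      have N0s: "N0 \<in> sets MX" using N0(3) by simp
      have sub: "Pair \<omega> -` Bad \<subseteq> obsX -` N0 \<inter> space Pz"
      proof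
        fix z assume "z \<in> Pair \<omega> -` Bad"
        then have z: "z \<in> space MZ" "\<not> Good \<omega> z" unfolding Bad_def by (auto simp: space_pair_measure)
        have "obsX z \<in> space MX" using measurable_space[OF obsX_m z(1)] .
        then have "obsX z \<in> N0" using N0(1) z(2) unfolding Good_def by auto
        then show "z \<in> obsX -` N0 \<inter> space Pz" using z(1) spPz by auto
      qed
      have "emeasure Pz (Pair \<omega> -` Bad) \<le> emeasure Pz (obsX -` N0 \<inter> space Pz)"
        using sub by (intro emeasure_mono) (auto intro: measurable_sets[OF obsX_Pz N0s])
      also have "\<dots> = emeasure (distr Pz MX obsX) N0" using emeasure_distr[OF obsX_Pz N0s] by simp
      also have "\<dots> = 0" using N0(2) .
      finally show "emeasure Pz (Pair \<omega> -` Bad) = 0" by simp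
    qed
    have lawX: "distr M MZ (X j) = Pz" for j using lawZ lawZ' by (cases j) (auto simp: X_def)
    have null: "emeasure M {\<omega>\<in>space M. (\<omega>, X j \<omega>) \<in> Bad} = 0" if "j \<notin> Inl ` {n<..N n}" for j
      by (rule indep_null[OF M indX that sF spF lawX Bad_sets AEz])
    have pmX: "(\<lambda>\<omega>. (\<omega>, X j \<omega>)) \<in> measurable M (F \<Otimes>\<^sub>M MZ)" for j
    proof -
      have FsubM: "sets F \<subseteq> sets M" unfolding sF0 using GP rvZ
        by (intro sets.sigma_sets_subset) (auto simp: G_def intro: measurable_sets)
      have "(\<lambda>\<omega>. \<omega>) \<in> measurable M F"
        by (rule measurableI) (use spF FsubM sets.sets_into_space in \<open>auto simp: Int_absorb2\<close>)
      then show ?thesis using rvX by (intro measurable_Pair) auto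
    qed
    have setX: "{\<omega>\<in>space M. (\<omega>, X j \<omega>) \<in> Bad} \<in> sets M" for j
    proof -
      have "{\<omega>\<in>space M. (\<omega>, X j \<omega>) \<in> Bad} = (\<lambda>\<omega>. (\<omega>, X j \<omega>)) -` Bad \<inter> space M" by auto
      then show ?thesis using measurable_sets[OF pmX Bad_sets] by simp
    qed
    define S1 where "S1 = {\<omega>\<in>space M. (\<omega>, X (Inl r) \<omega>) \<in> Bad}"
    define S2 where "S2 = {\<omega>\<in>space M. (\<omega>, X (Inr r) \<omega>) \<in> Bad}"
    have rn: "Inl r \<notin> Inl ` {n<..N n}" using r by auto
    have S1: "S1 \<in> sets M" "emeasure M S1 = 0" unfolding S1_def using setX null[OF rn] by auto
    have S2: "S2 \<in> sets M" "emeasure M S2 = 0" unfolding S2_def using setX null by auto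
    obtain N1 where N1: "{\<omega>\<in>space M. \<not> (\<forall>a\<in>{1..p}. \<forall>x\<in>space MX. \<bar>muhat n \<omega> a x\<bar> \<le> B)} \<subseteq> N1"
      "emeasure M N1 = 0" "N1 \<in> sets M"
      using muhat_bdd[of n] by (rule AE_E)
    define SY where "SY = {\<omega>\<in>space M. T \<le> \<bar>obsY (Z r \<omega>)\<bar>}"
    define SY' where "SY' = {\<omega>\<in>space M. T \<le> \<bar>obsY (Z' r \<omega>)\<bar>}"
    have tailset: "{z\<in>space MZ. T \<le> \<bar>obsY z\<bar>} \<in> sets MZ" using obsY_m by measurable
    have SY: "SY \<in> sets M" "measure M SY \<le> \<delta> / 4"
    proof -
      have eq: "SY = Z r -` {z\<in>space MZ. T \<le> \<bar>obsY z\<bar>} \<inter> space M"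
        unfolding SY_def using measurable_space[OF rvZ] by auto
      show "SY \<in> sets M" unfolding eq using measurable_sets[OF rvZ tailset] .
      have "measure M SY = measure Pz {z\<in>space MZ. T \<le> \<bar>obsY z\<bar>}"
        unfolding eq using measure_distr[OF rvZ tailset] lawZ by simp
      then show "measure M SY \<le> \<delta> / 4" using tail spPz by simp
    qed
    have SY': "SY' \<in> sets M" "measure M SY' \<le> \<delta> / 4"
    proof -
      have eq: "SY' = Z' r -` {z\<in>space MZ. T \<le> \<bar>obsY z\<bar>} \<inter> space M"
        unfolding SY'_def using measurable_space[OF rvZ'] by auto
      show "SY' \<in> sets M" unfolding eq using measurable_sets[OF rvZ' tailset] .
      have "measure M SY' = measure Pz {z\<in>space MZ. T \<le> \<bar>obsY z\<bar>}"
        unfolding eq using measure_distr[OF rvZ' tailset] lawZ' by simp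
      then show "measure M SY' \<le> \<delta> / 4" using tail spPz by simp
    qed
    define E where "E = space M - (S1 \<union> S2 \<union> N1 \<union> SY \<union> SY')"
    have Es: "E \<in> sets M" unfolding E_def using S1 S2 N1 SY SY' by auto
    have u1: "measure M (S1 \<union> S2) \<le> measure M S1 + measure M S2"
      using S1 S2 by (intro measure_Un_le) auto
    have u2: "measure M (S1 \<union> S2 \<union> N1) \<le> measure M (S1 \<union> S2) + measure M N1"
      using S1 S2 N1 by (intro measure_Un_le) auto
    have u3: "measure M (S1 \<union> S2 \<union> N1 \<union> SY) \<le> measure M (S1 \<union> S2 \<union> N1) + measure M SY"
      using S1 S2 N1 SY by (intro measure_Un_le) auto
    have u4: "measure M (S1 \<union> S2 \<union> N1 \<union> SY \<union> SY') \<le> measure M (S1 \<union> S2 \<union> N1 \<union> SY) + measure M SY'"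
      using S1 S2 N1 SY SY' by (intro measure_Un_le) auto
    have "measure M (S1 \<union> S2 \<union> N1 \<union> SY \<union> SY') \<le> measure M S1 + measure M S2 + measure M N1 + measure M SY + measure M SY'"
      using u1 u2 u3 u4 by linarith
    moreover have "measure M S1 = 0" "measure M S2 = 0" "measure M N1 = 0"
      using S1 S2 N1 by (auto simp: measure_def)
    ultimately have "measure M (S1 \<union> S2 \<union> N1 \<union> SY \<union> SY') \<le> \<delta>"
      using SY SY' \<delta> by linarith
    then have mE: "1 - \<delta> \<le> measure M E"
      unfolding E_def using prob_compl[of "S1 \<union> S2 \<union> N1 \<union> SY \<union> SY'"] S1 S2 N1 SY SY' by auto
    have bound: "\<bar>phiC p C (muhat n \<omega>) (pihat n \<omega>) z\<bar> \<le> K0"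
      if \<omega>: "\<omega> \<in> space M" "\<omega> \<notin> N1" and z: "z \<in> space MZ" and gz: "Good \<omega> z" and yz: "\<bar>obsY z\<bar> \<le> T"
        and C: "C \<in> codebooks p k mu (space MX)" for \<omega> z C
    proof -
      have xz: "obsX z \<in> space MX" using measurable_space[OF obsX_m z] .
      have mb: "\<forall>b\<in>{1..p}. \<bar>muhat n \<omega> b (obsX z)\<bar> \<le> B'"
        using N1(1) \<omega> xz unfolding B'_def by force
      have pb: "\<forall>b\<in>{1..p}. \<epsilon> \<le> pihat n \<omega> b (obsX z)" using gz unfolding Good_def by auto
      have qb: "\<forall>b\<in>{1..p}. \<bar>proj_cb p C (vec_of p (muhat n \<omega>) (obsX z)) b\<bar> \<le> Q"
        unfolding Q_def using q_bound[OF C mu_bdd] by blast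
      have B0: "0 \<le> B'" unfolding B'_def by simp
      show ?thesis unfolding K0_def
        by (rule phiC_bound[where p=p and mh="muhat n \<omega>" and z=z and B'=B' and eps=\<epsilon> and ph="pihat n \<omega>" and T=T and C=C and Q=Q, OF mb pb eps yz B0 less_imp_le[OF T0] qb])
    qed
    show "\<exists>E\<in>sets M. 1 - \<delta> \<le> measure M E \<and> (\<forall>\<omega>\<in>E. \<forall>C\<in>codebooks p k mu (space MX). \<bar>emp_risk p C (muhat n \<omega>) (pihat n \<omega>) n (\<lambda>i. Z i \<omega>) - emp_risk p C (muhat n \<omega>) (pihat n \<omega>) n (\<lambda>i. if i = r then Z' r \<omega> else Z i \<omega>)\<bar> \<le> 2 * K0 / real n)"
    proof (intro bexI[OF _ Es] conjI mE ballI)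
      fix \<omega> C assume \<omega>: "\<omega> \<in> E" and C: "C \<in> codebooks p k mu (space MX)"
      have \<omega>M: "\<omega> \<in> space M" "\<omega> \<notin> N1" using \<omega> unfolding E_def by auto
      have z1: "Z r \<omega> \<in> space MZ" "Z' r \<omega> \<in> space MZ"
        using measurable_space[OF rvZ \<omega>M(1)] measurable_space[OF rvZ' \<omega>M(1)] by auto
      have g1: "Good \<omega> (Z r \<omega>)" using \<omega> z1 unfolding E_def S1_def Bad_def X_def
        by (auto simp: space_pair_measure spF)
      have g2: "Good \<omega> (Z' r \<omega>)" using \<omega> z1 unfolding E_def S2_def Bad_def X_def
        by (auto simp: space_pair_measure spF)
      have y1: "\<bar>obsY (Z r \<omega>)\<bar> \<le> T" "\<bar>obsY (Z' r \<omega>)\<bar> \<le> T"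
        using \<omega> unfolding E_def SY_def SY'_def by auto
      have b1: "\<bar>phiC p C (muhat n \<omega>) (pihat n \<omega>) (Z r \<omega>)\<bar> \<le> K0"
        by (rule bound[OF \<omega>M z1(1) g1 y1(1) C])
      have b2: "\<bar>phiC p C (muhat n \<omega>) (pihat n \<omega>) (Z' r \<omega>)\<bar> \<le> K0"
        by (rule bound[OF \<omega>M z1(2) g2 y1(2) C])
      have "emp_risk p C (muhat n \<omega>) (pihat n \<omega>) n (\<lambda>i. Z i \<omega>) - emp_risk p C (muhat n \<omega>) (pihat n \<omega>) n (\<lambda>i. if i = r then Z' r \<omega> else Z i \<omega>)
          = (phiC p C (muhat n \<omega>) (pihat n \<omega>) (Z r \<omega>) - phiC p C (muhat n \<omega>) (pihat n \<omega>) (Z' r \<omega>)) / real n"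
        using emp_diff[OF r, of p C "muhat n \<omega>" "pihat n \<omega>" "\<lambda>i. Z i \<omega>" "Z' r \<omega>"] by simp
      moreover have "\<bar>phiC p C (muhat n \<omega>) (pihat n \<omega>) (Z r \<omega>) - phiC p C (muhat n \<omega>) (pihat n \<omega>) (Z' r \<omega>)\<bar> \<le> 2 * K0"
        using b1 b2 by linarith
      ultimately show "\<bar>emp_risk p C (muhat n \<omega>) (pihat n \<omega>) n (\<lambda>i. Z i \<omega>) - emp_risk p C (muhat n \<omega>) (pihat n \<omega>) n (\<lambda>i. if i = r then Z' r \<omega> else Z i \<omega>)\<bar> \<le> 2 * K0 / real n"
        by (simp add: divide_right_mono)
    qed
  qed
qed

end
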